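(* Let $h:(\mathbb{R}^n,0)\to(\mathbb{R}^n,0)$ be a Lipschitz homeomorphism germ such that $c_1\|x\|\le\|h(x)\|\le c_2\|x\|$ for some constants $c_1,c_2>0$ and all $x$ in a neighbourhood of $0$, and let $A\subset\mathbb{R}^n$ be a set-germ at $0$ with $0\in\overline{A}$. Suppose that $A$ satisfies condition (SSP) and that $h$ is an (SSP) map. Then $h(A)$ satisfies condition (SSP).
   Context: For a set-germ $A\subset\mathbb{R}^k$ at $0$ with $0\in\overline A$, $D(A)=\{a\in S^{k-1}:\exists\, x_i\in A\setminus\{0\},\ x_i\to0,\ x_i/\|x_i\|\to a\}$. For sequences, $\|u_m\|\ll\|v_m\|,\|w_m\|$ means $\|u_m\|/\|v_m\|\to0$ and $\|u_m\|/\|w_m\|\to0$. A set-germ $A\subset\mathbb{R}^k$ satisfies condition (SSP) if for every sequence $a_m\in\mathbb{R}^k$ tending to $0$ with $\lim a_m/\|a_m\|\in D(A)$ there is a sequence $b_m\in A$ with $\|a_m-b_m\|\ll\|a_m\|,\|b_m\|$. A map germ $h:(\mathbb{R}^n,0)\to(\mathbb{R}^n,0)$ is an (SSP) map if its graph $\{(x,h(x))\}\subset\mathbb{R}^n\times\mathbb{R}^n$ satisfies condition (SSP) at $(0,0)$. *)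

theory Defs
  imports "HOL-Analysis.Analysis"
begin

definition dirset :: "'a::real_normed_vector set \<Rightarrow> 'a set" where
  "dirset A = {d. \<exists>x::nat \<Rightarrow> 'a. (\<forall>i. x i \<in> A - {0}) \<and> x \<longlonglongrightarrow> 0 \<and>
                   (\<lambda>i. x i /\<^sub>R norm (x i)) \<longlonglongrightarrow> d}"

definition SSP :: "'a::real_normed_vector set \<Rightarrow> bool" where
  "SSP A \<longleftrightarrow> (\<forall>a::nat \<Rightarrow> 'a. a \<longlonglongrightarrow> 0 \<and> (\<exists>d\<in>dirset A. (\<lambda>m. a m /\<^sub>R norm (a m)) \<longlonglongrightarrow> d)
      \<longrightarrow> (\<exists>b::nat \<Rightarrow> 'a. (\<forall>m. b m \<in> A) \<and>
             (\<lambda>m. norm (a m - b m) / norm (a m)) \<longlonglongrightarrow> 0 \<and>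
             (\<lambda>m. norm (a m - b m) / norm (b m)) \<longlonglongrightarrow> 0))"

definition SSP_map :: "('a::real_normed_vector \<Rightarrow> 'a) \<Rightarrow> bool" where
  "SSP_map h \<longleftrightarrow> (\<exists>U. open U \<and> 0 \<in> U \<and> SSP {(x, h x) | x. x \<in> U})"

end

theory Submission
  imports Defs
begin

lemma dir_cont:
  fixes f :: "nat \<Rightarrow> 'b::real_normed_vector"
  assumes "f \<longlonglongrightarrow> l" "l \<noteq> 0"
  shows "(\<lambda>i. f i /\<^sub>R norm (f i)) \<longlonglongrightarrow> l /\<^sub>R norm l"
  using assms by (intro tendsto_intros) auto

lemma scale_dir:
  fixes t :: "'b::real_normed_vector"
  assumes "c > 0"
  shows "(c *\<^sub>R t) /\<^sub>R norm (c *\<^sub>R t) = t /\<^sub>R norm t"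
  using assms by (simp add: field_simps)

theorem theorem4p5:
  fixes h g :: "'a::euclidean_space \<Rightarrow> 'a" and A U V :: "'a set" and L c1 c2 :: real
  assumes "open U" and "0 \<in> U" and "open V"
    and "homeomorphism U V h g" and "h 0 = 0"
    and "L-lipschitz_on U h"
    and "c1 > 0" and "c2 > 0"
    and "\<forall>x\<in>U. c1 * norm x \<le> norm (h x) \<and> norm (h x) \<le> c2 * norm x"
    and "0 \<in> closure A"
    and "SSP A" and "SSP_map h"
  shows "SSP (h ` (A \<inter> U))"
  unfolding SSP_def
proof (intro allI impI)
  note hU = assms(9)
  fix a :: "nat \<Rightarrow> 'a"
  assume "a \<longlonglongrightarrow> 0 \<and> (\<exists>d\<in>dirset (h`(A\<inter>U)). (\<lambda>m. a m /\<^sub>R norm (a m)) \<longlonglongrightarrow> d)"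
  then obtain d where a0: "a \<longlonglongrightarrow> 0" and dD: "d \<in> dirset (h`(A\<inter>U))"
    and ad: "(\<lambda>m. a m /\<^sub>R norm (a m)) \<longlonglongrightarrow> d" by blast
  from dD obtain y where y1: "\<forall>i. y i \<in> h`(A\<inter>U) - {0}" and y0: "y \<longlonglongrightarrow> 0"
    and yd: "(\<lambda>i. y i /\<^sub>R norm (y i)) \<longlonglongrightarrow> d" unfolding dirset_def by blast
  have "\<forall>i. \<exists>x. x \<in> A \<inter> U \<and> h x = y i" using y1 by (metis DiffD1 imageE)
  then obtain x where x: "\<forall>i. x i \<in> A \<inter> U \<and> h (x i) = y i" by metis
  have ynz: "y i \<noteq> 0" for i using y1 by auto
  have xnz: "x i \<noteq> 0" for i using x ynz assms(5) by metis
  have nd: "norm d = 1"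
  proof -
    have "(\<lambda>i. norm (y i /\<^sub>R norm (y i))) \<longlonglongrightarrow> norm d" using yd by (rule tendsto_norm)
    moreover have "(\<lambda>i. norm (y i /\<^sub>R norm (y i))) = (\<lambda>i. 1)" using ynz by auto
    ultimately show ?thesis using LIMSEQ_unique tendsto_const by metis
  qed
  have xy1: "c1 * norm (x i) \<le> norm (y i)" and xy2: "norm (y i) \<le> c2 * norm (x i)" for i
    using hU[rule_format, of "x i"] x[rule_format, of i] by auto
  have x0: "x \<longlonglongrightarrow> 0"
  proof (rule Lim_null_comparison)
    show "\<forall>\<^sub>F i in sequentially. norm (x i) \<le> norm (y i) / c1"
      using xy1 assms(7) by (simp add: field_simps)
    show "(\<lambda>i. norm (y i) / c1) \<longlonglongrightarrow> 0"
      using y0 by (intro tendsto_divide_zero) (simp add: tendsto_norm_zero)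
  qed
  define z where "z i = x i /\<^sub>R norm (y i)" for i
  have zn: "norm (z i) = norm (x i) / norm (y i)" for i by (simp add: z_def divide_simps)
  have zb1: "norm (z i) \<le> 1/c1" for i
    unfolding zn using xy1[of i] ynz[of i] assms(7) by (simp add: field_simps)
  have zb2: "1/c2 \<le> norm (z i)" for i
    unfolding zn using xy2[of i] ynz[of i] assms(8) by (simp add: field_simps)
  have "bounded (range z)" using zb1 by (auto simp: bounded_iff)
  then obtain w r where r: "strict_mono r" and zw: "(z \<circ> r) \<longlonglongrightarrow> w"
    using bounded_imp_convergent_subsequence by blast
  have wn: "1/c2 \<le> norm w"
    using LIMSEQ_le_const[OF tendsto_norm[OF zw]] zb2 by auto
  have wnz: "w \<noteq> 0" using wn assms(8) by auto
  obtain U' where U': "open U'" "0 \<in> U'" and SG: "SSP {(x, h x) | x. x \<in> U'}"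
    using assms(12) unfolding SSP_map_def by blast
  define G where "G = {(x, h x) | x. x \<in> U'}"
  have "\<forall>\<^sub>F j in sequentially. x j \<in> U \<inter> U'"
    using topological_tendstoD[OF x0] U' assms(1,2) by blast
  then obtain N where N: "\<forall>j\<ge>N. x j \<in> U \<inter> U'" by (auto simp: eventually_sequentially)
  define s where "s i = r (i + N)" for i
  have sN: "N \<le> s i" for i unfolding s_def using seq_suble[OF r, of "i+N"] by simp
  have sub: "(\<lambda>i. f (s i)) \<longlonglongrightarrow> l" if "f \<longlonglongrightarrow> l" for f :: "nat \<Rightarrow> 'a" and l
    using LIMSEQ_ignore_initial_segment[OF LIMSEQ_subseq_LIMSEQ[OF that r], of N]
    by (simp add: s_def o_def)
  have zsw: "(\<lambda>i. z (s i)) \<longlonglongrightarrow> w"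
    using LIMSEQ_ignore_initial_segment[OF zw, of N] by (simp add: s_def o_def)
  have xz: "x i = norm (y i) *\<^sub>R z i" for i using ynz[of i] by (simp add: z_def)
  define e where "e = w /\<^sub>R norm w"
  have eA: "e \<in> dirset A"
    unfolding dirset_def
  proof (intro CollectI exI conjI allI)
    show "x (s i) \<in> A - {0}" for i using x xnz by auto
    show "(\<lambda>i. x (s i)) \<longlonglongrightarrow> 0" using sub[OF x0] .
    have "(\<lambda>i. x (s i) /\<^sub>R norm (x (s i))) = (\<lambda>i. z (s i) /\<^sub>R norm (z (s i)))"
      using xz scale_dir ynz by (metis zero_less_norm_iff)
    then show "(\<lambda>i. x (s i) /\<^sub>R norm (x (s i))) \<longlonglongrightarrow> e"
      unfolding e_def using dir_cont[OF zsw wnz] by simp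
  qed
  have dG: "(w, d) /\<^sub>R norm (w, d) \<in> dirset G"
    unfolding dirset_def
  proof (intro CollectI exI conjI allI)
    show "(x (s i), y (s i)) \<in> G - {0}" for i
      using x xnz N sN unfolding G_def by (auto simp: zero_prod_def)
    show "(\<lambda>i. (x (s i), y (s i))) \<longlonglongrightarrow> 0"
      using tendsto_Pair[OF sub[OF x0] sub[OF y0]] by (simp add: zero_prod_def)
    have eqi: "(x (s i), y (s i)) = norm (y (s i)) *\<^sub>R (z (s i), y (s i) /\<^sub>R norm (y (s i)))" for i
      using xz ynz by simp
    have "(x (s i), y (s i)) /\<^sub>R norm (x (s i), y (s i)) =
        (z (s i), y (s i) /\<^sub>R norm (y (s i))) /\<^sub>R norm (z (s i), y (s i) /\<^sub>R norm (y (s i)))" for i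
    proof -
      have "norm (y (s i)) > 0" using ynz by simp
      then show ?thesis unfolding eqi[of i] by (rule scale_dir)
    qed
    then have EQ: "(\<lambda>i. (x (s i), y (s i)) /\<^sub>R norm (x (s i), y (s i))) =
        (\<lambda>i. (z (s i), y (s i) /\<^sub>R norm (y (s i))) /\<^sub>R norm (z (s i), y (s i) /\<^sub>R norm (y (s i))))"
      by (rule ext)
    have mov: "(\<lambda>i. (z (s i), y (s i) /\<^sub>R norm (y (s i)))) \<longlonglongrightarrow> (w, d)"
      using tendsto_Pair[OF zsw sub[OF yd]] .
    have lim: "(\<lambda>i. (z (s i), y (s i) /\<^sub>R norm (y (s i))) /\<^sub>R norm (z (s i), y (s i) /\<^sub>R norm (y (s i)))) \<longlonglongrightarrow> (w, d) /\<^sub>R norm (w, d)"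
      by (rule dir_cont[OF mov]) (simp add: wnz zero_prod_def)
    show "(\<lambda>i. (x (s i), y (s i)) /\<^sub>R norm (x (s i), y (s i))) \<longlonglongrightarrow> (w, d) /\<^sub>R norm (w, d)"
      unfolding EQ by (rule lim)
  qed
  have anz_ev: "\<forall>\<^sub>F m in sequentially. a m \<noteq> 0"
  proof -
    have "\<forall>\<^sub>F m in sequentially. norm (a m /\<^sub>R norm (a m)) > 1/2"
      using order_tendstoD(1)[OF tendsto_norm[OF ad], of "1/2"] nd by simp
    then show ?thesis by eventually_elim auto
  qed
  define \<alpha> where "\<alpha> m = (norm (a m) *\<^sub>R w, a m)" for m
  have \<alpha>0: "\<alpha> \<longlonglongrightarrow> 0"
  proof -
    have "(\<lambda>m. norm (a m) *\<^sub>R w) \<longlonglongrightarrow> 0"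
      using tendsto_scaleR[OF tendsto_norm[OF a0] tendsto_const[of w]] by simp
    then show ?thesis using tendsto_Pair[OF _ a0] unfolding \<alpha>_def zero_prod_def by blast
  qed
  have \<alpha>d: "(\<lambda>m. \<alpha> m /\<^sub>R norm (\<alpha> m)) \<longlonglongrightarrow> (w, d) /\<^sub>R norm (w, d)"
  proof -
    have "(\<lambda>m. (w, a m /\<^sub>R norm (a m))) \<longlonglongrightarrow> (w, d)"
      using tendsto_Pair[OF tendsto_const ad] .
    then have 1: "(\<lambda>m. (w, a m /\<^sub>R norm (a m)) /\<^sub>R norm (w, a m /\<^sub>R norm (a m))) \<longlonglongrightarrow> (w, d) /\<^sub>R norm (w, d)"
      by (rule dir_cont) (simp_all add: wnz zero_prod_def)
    have "\<forall>\<^sub>F m in sequentially. (w, a m /\<^sub>R norm (a m)) /\<^sub>R norm (w, a m /\<^sub>R norm (a m)) = \<alpha> m /\<^sub>R norm (\<alpha> m)"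
      using anz_ev
    proof eventually_elim
      case (elim m)
      have eq: "\<alpha> m = norm (a m) *\<^sub>R (w, a m /\<^sub>R norm (a m))" using elim by (simp add: \<alpha>_def)
      show ?case unfolding eq by (rule scale_dir[symmetric]) (use elim in simp)
    qed
    then show ?thesis by (rule Lim_transform_eventually[OF 1])
  qed
  obtain \<beta> where \<beta>G: "\<forall>m. \<beta> m \<in> G" and \<beta>1: "(\<lambda>m. norm (\<alpha> m - \<beta> m) / norm (\<alpha> m)) \<longlonglongrightarrow> 0"
    using SG[unfolded SSP_def, rule_format, of \<alpha>] \<alpha>0 \<alpha>d dG unfolding G_def by blast
  have "\<forall>m. \<exists>p. \<beta> m = (p, h p) \<and> p \<in> U'" using \<beta>G unfolding G_def by blast
  then obtain p where p: "\<forall>m. \<beta> m = (p m, h (p m)) \<and> p m \<in> U'" by metis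
  define \<epsilon> where "\<epsilon> m = norm (\<alpha> m - \<beta> m) / norm (a m)" for m
  have \<epsilon>0: "\<epsilon> \<longlonglongrightarrow> 0"
  proof (rule Lim_null_comparison)
    show "(\<lambda>m. (norm w + 1) * (norm (\<alpha> m - \<beta> m) / norm (\<alpha> m))) \<longlonglongrightarrow> 0"
      using tendsto_mult[OF tendsto_const \<beta>1] by simp
    show "\<forall>\<^sub>F m in sequentially. norm (\<epsilon> m) \<le> (norm w + 1) * (norm (\<alpha> m - \<beta> m) / norm (\<alpha> m))"
    proof (intro always_eventually allI)
      fix m
      show "norm (\<epsilon> m) \<le> (norm w + 1) * (norm (\<alpha> m - \<beta> m) / norm (\<alpha> m))"
      proof (cases "a m = 0")
        case True then show ?thesis by (simp add: \<epsilon>_def)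
      next
        case False
        have n1: "norm (\<alpha> m) \<le> (norm w + 1) * norm (a m)"
          using norm_Pair_le[of "norm (a m) *\<^sub>R w" "a m"] by (simp add: \<alpha>_def algebra_simps)
        have n2: "norm (a m) \<le> norm (\<alpha> m)" using norm_snd_le[of "a m" "norm (a m) *\<^sub>R w"]
          by (simp add: \<alpha>_def)
        have pa: "norm (a m) > 0" using False by simp
        have "norm (\<alpha> m - \<beta> m) / norm (a m) \<le> (norm w + 1) * (norm (\<alpha> m - \<beta> m) / norm (\<alpha> m))"
        proof -
          have pal: "0 < norm (\<alpha> m)" using n2 pa by linarith
          have "norm (\<alpha> m - \<beta> m) * norm (\<alpha> m) \<le> norm (\<alpha> m - \<beta> m) * ((norm w + 1) * norm (a m))"
            using n1 by (intro mult_left_mono) auto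
          then show ?thesis using pal pa by (simp add: divide_simps algebra_simps)
        qed
        then show ?thesis by (simp add: \<epsilon>_def)
      qed
    qed
  qed
  have comp: "norm (norm (a m) *\<^sub>R w - p m) \<le> \<epsilon> m * norm (a m)"
    "norm (a m - h (p m)) \<le> \<epsilon> m * norm (a m)" if "a m \<noteq> 0" for m
  proof -
    have e: "\<alpha> m - \<beta> m = (norm (a m) *\<^sub>R w - p m, a m - h (p m))" using p by (simp add: \<alpha>_def)
    have "\<epsilon> m * norm (a m) = norm (\<alpha> m - \<beta> m)" using that by (simp add: \<epsilon>_def)
    then show "norm (norm (a m) *\<^sub>R w - p m) \<le> \<epsilon> m * norm (a m)"
      "norm (a m - h (p m)) \<le> \<epsilon> m * norm (a m)"
      using norm_fst_le norm_snd_le by (metis e)+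
  qed
  have pw: "(\<lambda>m. p m /\<^sub>R norm (a m)) \<longlonglongrightarrow> w"
  proof (rule LIM_zero_cancel, rule Lim_null_comparison)
    show "\<epsilon> \<longlonglongrightarrow> 0" by (rule \<epsilon>0)
    show "\<forall>\<^sub>F m in sequentially. norm (p m /\<^sub>R norm (a m) - w) \<le> \<epsilon> m"
      using anz_ev
    proof eventually_elim
      case (elim m)
      have "p m /\<^sub>R norm (a m) - w = - ((norm (a m) *\<^sub>R w - p m) /\<^sub>R norm (a m))"
        using elim by (simp add: algebra_simps)
      then have "norm (p m /\<^sub>R norm (a m) - w) = norm (norm (a m) *\<^sub>R w - p m) / norm (a m)"
        by (simp add: divide_simps)
      also have "\<dots> \<le> \<epsilon> m" using comp(1)[OF elim] elim by (simp add: divide_simps)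
      finally show ?case .
    qed
  qed
  have pnz_ev: "\<forall>\<^sub>F m in sequentially. p m \<noteq> 0"
  proof -
    have "\<forall>\<^sub>F m in sequentially. norm (p m /\<^sub>R norm (a m)) > 0"
      using order_tendstoD(1)[OF tendsto_norm[OF pw], of 0] wnz by simp
    then show ?thesis by eventually_elim auto
  qed
  have pe: "(\<lambda>m. p m /\<^sub>R norm (p m)) \<longlonglongrightarrow> e"
  proof -
    have "\<forall>\<^sub>F m in sequentially. (p m /\<^sub>R norm (a m)) /\<^sub>R norm (p m /\<^sub>R norm (a m)) = p m /\<^sub>R norm (p m)"
      using anz_ev
    proof eventually_elim
      case (elim m)
      then show ?case by (intro scale_dir) simp
    qed
    then show ?thesis unfolding e_def by (rule Lim_transform_eventually[OF dir_cont[OF pw wnz]])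
  qed
  have p0: "p \<longlonglongrightarrow> 0"
  proof (rule Lim_null_comparison)
    show "(\<lambda>m. (norm w + \<epsilon> m) * norm (a m)) \<longlonglongrightarrow> 0"
      using tendsto_mult[OF tendsto_add[OF tendsto_const \<epsilon>0] tendsto_norm[OF a0]] by simp
    show "\<forall>\<^sub>F m in sequentially. norm (p m) \<le> (norm w + \<epsilon> m) * norm (a m)"
      using anz_ev
    proof eventually_elim
      case (elim m)
      have "norm (p m) \<le> norm (norm (a m) *\<^sub>R w) + norm (norm (a m) *\<^sub>R w - p m)"
        by (metis norm_minus_commute norm_triangle_sub)
      then show ?case using comp(1)[OF elim] by (simp add: algebra_simps)
    qed
  qed
  obtain q where qA: "\<forall>m. q m \<in> A" and \<delta>0: "(\<lambda>m. norm (p m - q m) / norm (p m)) \<longlonglongrightarrow> 0"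
    using assms(11)[unfolded SSP_def, rule_format, of p] p0 pe eA by blast
  define \<delta> where "\<delta> m = norm (p m - q m) / norm (p m)" for m
  have q0: "q \<longlonglongrightarrow> 0"
  proof (rule Lim_null_comparison)
    show "(\<lambda>m. (1 + \<delta> m) * norm (p m)) \<longlonglongrightarrow> 0"
      using tendsto_mult[OF tendsto_add[OF tendsto_const \<delta>0] tendsto_norm[OF p0]]
      by (simp add: \<delta>_def)
    show "\<forall>\<^sub>F m in sequentially. norm (q m) \<le> (1 + \<delta> m) * norm (p m)"
      using pnz_ev
    proof eventually_elim
      case (elim m)
      have "norm (q m) \<le> norm (p m) + norm (p m - q m)"
        by (metis norm_minus_commute norm_triangle_sub)
      then show ?case using elim by (simp add: \<delta>_def algebra_simps)
    qed
  qed
  have pU: "\<forall>\<^sub>F m in sequentially. p m \<in> U" using topological_tendstoD[OF p0 assms(1,2)] .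
  have qU: "\<forall>\<^sub>F m in sequentially. q m \<in> U" using topological_tendstoD[OF q0 assms(1,2)] .
  have "U \<inter> A \<noteq> {}" using open_Int_closure_eq_empty[OF assms(1), of A] assms(2,10) by blast
  then obtain x0 where x0A: "x0 \<in> A \<inter> U" by blast
  define b where "b m = (if q m \<in> U then h (q m) else h x0)" for m
  have bA: "\<forall>m. b m \<in> h ` (A \<inter> U)" using qA x0A by (auto simp: b_def)
  have Lnn: "0 \<le> L" using lipschitz_on_nonneg[OF assms(6)] .
  define \<rho> where "\<rho> m = norm (a m - b m) / norm (a m)" for m
  have \<rho>0: "\<rho> \<longlonglongrightarrow> 0"
  proof (rule Lim_null_comparison)
    show "(\<lambda>m. \<epsilon> m + L * \<delta> m * (norm w + \<epsilon> m)) \<longlonglongrightarrow> 0"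
      using tendsto_add[OF \<epsilon>0 tendsto_mult[OF tendsto_mult[OF tendsto_const \<delta>0] tendsto_add[OF tendsto_const \<epsilon>0]]]
      by (simp add: \<delta>_def)
    show "\<forall>\<^sub>F m in sequentially. norm (\<rho> m) \<le> \<epsilon> m + L * \<delta> m * (norm w + \<epsilon> m)"
      using anz_ev pnz_ev pU qU
    proof eventually_elim
      case (elim m)
      have bq: "b m = h (q m)" using elim by (simp add: b_def)
      have lip: "norm (h (p m) - h (q m)) \<le> L * norm (p m - q m)"
        using lipschitz_onD[OF assms(6), of "p m" "q m"] elim by (simp add: dist_norm)
      have pq: "norm (p m - q m) = \<delta> m * norm (p m)" using elim by (simp add: \<delta>_def)
      have pn: "norm (p m) \<le> (norm w + \<epsilon> m) * norm (a m)"
      proof -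
        have "norm (p m) \<le> norm (norm (a m) *\<^sub>R w) + norm (norm (a m) *\<^sub>R w - p m)"
          by (metis norm_minus_commute norm_triangle_sub)
        then show ?thesis using comp(1)[of m] elim by (simp add: algebra_simps)
      qed
      have d0: "0 \<le> \<delta> m" by (simp add: \<delta>_def)
      have "norm (a m - b m) \<le> norm (a m - h (p m)) + norm (h (p m) - h (q m))"
        unfolding bq using norm_triangle_ineq[of "a m - h (p m)" "h (p m) - h (q m)"] by simp
      also have "\<dots> \<le> \<epsilon> m * norm (a m) + L * (\<delta> m * ((norm w + \<epsilon> m) * norm (a m)))"
        using comp(2)[of m] elim lip pq mult_left_mono[OF mult_left_mono[OF pn d0] Lnn] by simp
      finally have "norm (a m - b m) \<le> (\<epsilon> m + L * \<delta> m * (norm w + \<epsilon> m)) * norm (a m)"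
        by (simp add: algebra_simps)
      then show ?case using elim by (simp add: \<rho>_def divide_simps)
    qed
  qed
  have \<rho>2: "(\<lambda>m. norm (a m - b m) / norm (b m)) \<longlonglongrightarrow> 0"
  proof (rule Lim_null_comparison)
    show "(\<lambda>m. 2 * \<rho> m) \<longlonglongrightarrow> 0" using tendsto_mult[OF tendsto_const \<rho>0] by simp
    have "\<forall>\<^sub>F m in sequentially. \<rho> m < 1/2" using order_tendstoD(2)[OF \<rho>0, of "1/2"] by simp
    then show "\<forall>\<^sub>F m in sequentially. norm (norm (a m - b m) / norm (b m)) \<le> 2 * \<rho> m"
      using anz_ev
    proof eventually_elim
      case (elim m)
      have an: "norm (a m) > 0" using elim by simp
      have r: "norm (a m - b m) < norm (a m) / 2" using elim an by (simp add: \<rho>_def divide_simps)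
      have "norm (a m) \<le> norm (b m) + norm (a m - b m)"
        by (metis add.commute norm_triangle_sub)
      then have bn: "norm (a m) / 2 \<le> norm (b m)" using r by simp
      have "norm (a m - b m) / norm (b m) \<le> norm (a m - b m) / (norm (a m) / 2)"
      proof (rule divide_left_mono)
        have bpos: "norm (b m) > 0" using bn an by linarith
        show "0 < norm (b m) * (norm (a m) / 2)" using bpos an by simp
      qed (use bn in auto)
      moreover have "norm (a m - b m) / (norm (a m) / 2) = 2 * \<rho> m" by (simp add: \<rho>_def)
      ultimately show ?case by simp
    qed
  qed
  show "\<exists>b. (\<forall>m. b m \<in> h ` (A \<inter> U)) \<and>
             (\<lambda>m. norm (a m - b m) / norm (a m)) \<longlonglongrightarrow> 0 \<and>
             (\<lambda>m. norm (a m - b m) / norm (b m)) \<longlonglongrightarrow> 0"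
    using bA \<rho>0 \<rho>2 unfolding \<rho>_def by blast
qed

end
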